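(* In the setting of the context, let $z\in Z$ and suppose there exists $Y^0(z)\subset Y$ whose closure has nonempty interior and such that any two points $y',y''\in Y^0(z)$ can be connected by an admissible trajectory of the associated system (there are $S>0$ and an admissible pair $(u(\cdot),y(\cdot))$ on $[0,S]$ with $y(0)=y'$, $y(S)=y''$). Then there exists $\omega\in\mathbb R^M$ such that $\eta(y)=\sum_{i=1}^M\omega_i\phi_i(y)$ satisfies $$\sigma^*_{N,M}(z)\le G(u,y,z)+\nabla\zeta^{N,M}(z)^Tg(u,y,z)+\nabla\eta(y)^Tf(u,y,z)\quad\forall(u,y)\in U\times Y,$$ i.e. a solution of the $(N,M)$-approximating associated dual problem exists.
   Context: $U$ compact metric space, $Y\subset\mathbb R^m$, $Z\subset\mathbb R^n$ compact, $f,g$ continuous from $U\times\mathbb R^m\times\mathbb R^n$ to $\mathbb R^m,\mathbb R^n$, Lipschitz in $(y,z)$, $G$ continuous real valued. $\phi_i\in C^1(\mathbb R^m)$ ($i\ge1$) is a fixed sequence; standing assumption: for each $M$ the gradients $\nabla\phi_1,\dots,\nabla\phi_M$ are linearly independent on every nonempty open subset of $\mathbb R^m$. The associated system is $y'(\tau)=f(u(\tau),y(\tau),z)$ with $z$ fixed; a pair $(u,y)$ ($u$ measurable, $y$ absolutely continuous) is admissible if the equation holds a.e. and $u(\tau)\in U$, $y(\tau)\in Y$. Fix $N,M$ and a function $\zeta^{N,M}\in C^1(\mathbb R^n)$ (in the paper, a solution of the $(N,M)$-approximating averaged dual problem). With $\mathcal V_M=\{\sum_{i=1}^M\omega_i\phi_i:\omega\in\mathbb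 R^M\}$, $\sigma^*_{N,M}(z)=\sup_{\eta\in\mathcal V_M}\{\theta:\theta\le G(u,y,z)+\nabla\zeta^{N,M}(z)^Tg(u,y,z)+\nabla\eta(y)^Tf(u,y,z)\ \forall(u,y)\in U\times Y\}$. *)

theory Defs
  imports "HOL-Analysis.Analysis"
begin

definition abs_cont_on :: "real \<Rightarrow> real \<Rightarrow> (real \<Rightarrow> 'a::real_normed_vector) \<Rightarrow> bool" where
  "abs_cont_on a b y \<longleftrightarrow>
     (\<forall>\<epsilon>>0. \<exists>\<delta>>0. \<forall>(n::nat) (l::nat \<Rightarrow> real) (r::nat \<Rightarrow> real).
        (\<forall>k<n. a \<le> l k \<and> l k \<le> r k \<and> r k \<le> b) \<and>
        (\<forall>k<n. \<forall>j<n. k \<noteq> j \<longrightarrow> r k \<le> l j \<or> r j \<le> l k) \<and>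
        (\<Sum>k<n. r k - l k) < \<delta>
        \<longrightarrow> (\<Sum>k<n. norm (y (r k) - y (l k))) < \<epsilon>)"

definition admissible_pair ::
  "'u::topological_space set \<Rightarrow> 'a::euclidean_space set \<Rightarrow> ('u \<Rightarrow> 'a \<Rightarrow> 'b \<Rightarrow> 'a) \<Rightarrow> 'b
     \<Rightarrow> real \<Rightarrow> (real \<Rightarrow> 'u) \<Rightarrow> (real \<Rightarrow> 'a) \<Rightarrow> bool" where
  "admissible_pair U Y f z S u y \<longleftrightarrow>
     u \<in> borel_measurable (restrict_space lebesgue {0..S}) \<and>
     abs_cont_on 0 S y \<and>
     (AE t in lebesgue. t \<in> {0..S} \<longrightarrow> (y has_vector_derivative f (u t) (y t) z) (at t)) \<and>
     (\<forall>t\<in>{0..S}. u t \<in> U \<and> y t \<in> Y)"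

text \<open>The gradient of eta = sum omega_i phi_i is
  sum omega_i grad phi_i; gphi i is the gradient of phi i, gzeta that of zeta.\<close>
definition sigma_star ::
  "'u set \<Rightarrow> 'a::euclidean_space set \<Rightarrow> ('u \<Rightarrow> 'a \<Rightarrow> 'b::euclidean_space \<Rightarrow> 'a)
   \<Rightarrow> ('u \<Rightarrow> 'a \<Rightarrow> 'b \<Rightarrow> 'b) \<Rightarrow> ('u \<Rightarrow> 'a \<Rightarrow> 'b \<Rightarrow> real) \<Rightarrow> (nat \<Rightarrow> 'a \<Rightarrow> 'a)
   \<Rightarrow> ('b \<Rightarrow> 'b) \<Rightarrow> nat \<Rightarrow> 'b \<Rightarrow> ereal" where
  "sigma_star U Y f g G gphi gzeta M z =
     (SUP \<theta>\<in>{\<theta>::real. \<exists>\<omega>::nat \<Rightarrow> real. \<forall>u\<in>U. \<forall>y\<in>Y.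
        \<theta> \<le> G u y z + gzeta z \<bullet> g u y z + (\<Sum>i=1..M. \<omega> i *\<^sub>R gphi i y) \<bullet> f u y z}. ereal \<theta>)"

end

theory Submission
  imports Defs
begin

lemma abs_contD:
  assumes "abs_cont_on a b y" "e > 0"
  obtains d where "d > 0" "\<And>(n::nat) l r. (\<forall>k<n. a \<le> l k \<and> l k \<le> r k \<and> r k \<le> b) \<Longrightarrow>
        (\<forall>k<n. \<forall>j<n. k \<noteq> j \<longrightarrow> r k \<le> l j \<or> r j \<le> l k) \<Longrightarrow>
        (\<Sum>k<n. r k - l k) < d
        \<Longrightarrow> (\<Sum>k<n. norm (y (r k) - y (l k))) < e"
proof -
  have "\<exists>d>0. \<forall>(n::nat) l r. (\<forall>k<n. a \<le> l k \<and> l k \<le> r k \<and> r k \<le> b) \<and>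
        (\<forall>k<n. \<forall>j<n. k \<noteq> j \<longrightarrow> r k \<le> l j \<or> r j \<le> l k) \<and>
        (\<Sum>k<n. r k - l k) < d
        \<longrightarrow> (\<Sum>k<n. norm (y (r k) - y (l k))) < e"
    using assms unfolding abs_cont_on_def by (elim allE[where x=e]) (erule mp)
  then obtain d where "d > 0" and H: "\<forall>(n::nat) l r. (\<forall>k<n. a \<le> l k \<and> l k \<le> r k \<and> r k \<le> b) \<and>
        (\<forall>k<n. \<forall>j<n. k \<noteq> j \<longrightarrow> r k \<le> l j \<or> r j \<le> l k) \<and>
        (\<Sum>k<n. r k - l k) < d
        \<longrightarrow> (\<Sum>k<n. norm (y (r k) - y (l k))) < e"
    by blast
  show thesis by (rule that[OF \<open>d>0\<close>]) (use H in blast)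
qed

lemma abs_cont_imp_cont:
  fixes \<phi> :: "real \<Rightarrow> 'a::real_normed_vector"
  assumes "abs_cont_on a b \<phi>" shows "continuous_on {a..b} \<phi>"
  unfolding continuous_on_iff
proof (intro ballI allI impI)
  fix x e :: real assume x: "x \<in> {a..b}" and e: "0 < e"
  obtain d where d: "d > 0" and H: "\<And>(n::nat) l r. (\<forall>k<n. a \<le> l k \<and> l k \<le> r k \<and> r k \<le> b) \<Longrightarrow>
        (\<forall>k<n. \<forall>j<n. k \<noteq> j \<longrightarrow> r k \<le> l j \<or> r j \<le> l k) \<Longrightarrow>
        (\<Sum>k<n. r k - l k) < d
        \<Longrightarrow> (\<Sum>k<n. norm (\<phi> (r k) - \<phi> (l k))) < e"
    using abs_contD[OF assms e] by blast
  show "\<exists>d>0. \<forall>x'\<in>{a..b}. dist x' x < d \<longrightarrow> dist (\<phi> x') (\<phi> x) < e"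
  proof (intro exI conjI ballI impI)
    fix x' assume x': "x' \<in> {a..b}" "dist x' x < d"
    have "norm (\<phi> (max x x') - \<phi> (min x x')) < e"
      using H[of 1 "\<lambda>_. min x x'" "\<lambda>_. max x x'"] x x' by (auto simp: dist_real_def)
    then show "dist (\<phi> x') (\<phi> x) < e"
      by (cases "x \<le> x'") (auto simp: dist_norm norm_minus_commute max_def min_def)
  qed (rule d)
qed

lemma abs_cont_add_lin:
  fixes \<phi> :: "real \<Rightarrow> real"
  assumes "abs_cont_on a b \<phi>" "c > 0" shows "abs_cont_on a b (\<lambda>t. \<phi> t + c * t)"
  unfolding abs_cont_on_def
proof (intro allI impI)
  fix e :: real assume e: "0 < e"
  obtain d where d: "d > 0" and H: "\<And>(n::nat) l r. (\<forall>k<n. a \<le> l k \<and> l k \<le> r k \<and> r k \<le> b) \<Longrightarrow>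
        (\<forall>k<n. \<forall>j<n. k \<noteq> j \<longrightarrow> r k \<le> l j \<or> r j \<le> l k) \<Longrightarrow>
        (\<Sum>k<n. r k - l k) < d
        \<Longrightarrow> (\<Sum>k<n. norm (\<phi> (r k) - \<phi> (l k))) < e/2"
    using abs_contD[OF assms(1) half_gt_zero[OF e]] by blast
  show "\<exists>d>0. \<forall>(n::nat) l r. (\<forall>k<n. a \<le> l k \<and> l k \<le> r k \<and> r k \<le> b) \<and>
        (\<forall>k<n. \<forall>j<n. k \<noteq> j \<longrightarrow> r k \<le> l j \<or> r j \<le> l k) \<and>
        (\<Sum>k<n. r k - l k) < d
        \<longrightarrow> (\<Sum>k<n. norm ((\<phi> (r k) + c * r k) - (\<phi> (l k) + c * l k))) < e"
  proof (intro exI[of _ "min d (e/(2*c))"] conjI allI impI)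
    show "0 < min d (e/(2*c))" using d e assms(2) by simp
    fix n::nat and l r assume A: "(\<forall>k<n. a \<le> l k \<and> l k \<le> r k \<and> r k \<le> b) \<and>
        (\<forall>k<n. \<forall>j<n. k \<noteq> j \<longrightarrow> r k \<le> l j \<or> r j \<le> l k) \<and>
        (\<Sum>k<n. r k - l k) < min d (e/(2*c))"
    have 1: "(\<Sum>k<n. norm (\<phi> (r k) - \<phi> (l k))) < e/2" by (rule H[of n l r]) (use A in auto)
    have "(\<Sum>k<n. norm ((\<phi> (r k) + c * r k) - (\<phi> (l k) + c * l k)))
        \<le> (\<Sum>k<n. norm (\<phi> (r k) - \<phi> (l k)) + c * (r k - l k))"
    proof (rule sum_mono)
      fix k assume "k \<in> {..<n}"
      then have "l k \<le> r k" using A by auto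
      then show "norm ((\<phi> (r k) + c * r k) - (\<phi> (l k) + c * l k)) \<le> norm (\<phi> (r k) - \<phi> (l k)) + c * (r k - l k)"
        using mult_left_mono[OF \<open>l k \<le> r k\<close>, of c] assms(2) by (simp add: algebra_simps abs_if; linarith)
    qed
    also have "\<dots> = (\<Sum>k<n. norm (\<phi> (r k) - \<phi> (l k))) + c * (\<Sum>k<n. r k - l k)"
      by (simp add: sum.distrib sum_distrib_left)
    also have "c * (\<Sum>k<n. r k - l k) \<le> c * (e/(2*c))"
      using A assms(2) by (intro mult_left_mono) auto
    also have "c * (e/(2*c)) = e/2" using assms(2) by simp
    finally show "(\<Sum>k<n. norm ((\<phi> (r k) + c * r k) - (\<phi> (l k) + c * l k))) < e" using 1 by linarith
  qed
qed

lemma open_conn_real_eq: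
  fixes C :: "real set"
  assumes "open C" "connected C" "C \<noteq> {}" "bounded C"
  shows "C = {Inf C<..<Sup C}"
proof
  have bb: "bdd_below C" "bdd_above C" using assms(4) by (auto simp: bounded_imp_bdd_below bounded_imp_bdd_above)
  show "C \<subseteq> {Inf C<..<Sup C}"
  proof
    fix x assume x: "x \<in> C"
    then obtain e where e: "e > 0" "ball x e \<subseteq> C" using assms(1) open_contains_ball by blast
    have "x - e/2 \<in> C" "x + e/2 \<in> C" using e by (auto simp: dist_real_def intro!: subsetD[OF e(2)])
    then have "Inf C \<le> x - e/2" "x + e/2 \<le> Sup C" using bb by (auto intro: cInf_lower cSup_upper)
    then show "x \<in> {Inf C<..<Sup C}" using e by auto
  qed
  show "{Inf C<..<Sup C} \<subseteq> C"
  proof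
    fix x assume x: "x \<in> {Inf C<..<Sup C}"
    then obtain c1 where c1: "c1 \<in> C" "c1 < x" using cInf_less_iff[OF assms(3) bb(1)] by auto
    obtain c2 where c2: "c2 \<in> C" "x < c2" using x less_cSup_iff[OF assms(3) bb(2)] by auto
    have "is_interval C" using assms(2) is_interval_connected_1 by blast
    then show "x \<in> C" using c1 c2 unfolding is_interval_1 by (meson less_imp_le)
  qed
qed

lemma test1: fixes x y :: real shows "x \<le> y \<Longrightarrow> measure lebesgue {x..y} = y - x" by simp
lemma test2: fixes x y :: real shows "x \<le> y \<Longrightarrow> measure lebesgue {x<..<y} = y - x" by simp

lemma ioo_mem: "C = {l<..<r} \<Longrightarrow> x \<in> C \<longleftrightarrow> l < x \<and> x < (r::real)" by simp
lemma ioo_meas: "C = {l<..<r} \<Longrightarrow> l \<le> r \<Longrightarrow> measure lebesgue C = r - (l::real)" by simp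
lemma ioo_lmeas: "C = {l<..<(r::real)} \<Longrightarrow> C \<in> lmeasurable" by simp
lemma ioo_disj:
  assumes "C = {l<..<r}" "C' = {l'<..<r'}" "C \<inter> C' = {}" "l < r" "l' < (r'::real)"
  shows "r \<le> l' \<or> r' \<le> l"
proof (rule ccontr)
  assume "\<not> (r \<le> l' \<or> r' \<le> l)"
  then have "(max l l' + min r r')/2 \<in> C" "(max l l' + min r r')/2 \<in> C'"
    using assms(4,5) by (auto simp: assms(1,2) max_def min_def)
  then show False using assms(3) by blast
qed

lemma luzin:
  fixes \<phi> :: "real \<Rightarrow> real"
  assumes ac: "abs_cont_on a b \<phi>" and N: "negligible N" "N \<subseteq> {a<..<b}"
  shows "negligible (\<phi> ` N)"
  unfolding negligible_outer_le
proof (intro allI impI)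
  fix e :: real assume e: "e > 0"
  obtain \<delta> where \<delta>: "\<delta> > 0" and H: "\<And>(n::nat) l r. (\<forall>k<n. a \<le> l k \<and> l k \<le> r k \<and> r k \<le> b) \<Longrightarrow>
        (\<forall>k<n. \<forall>j<n. k \<noteq> j \<longrightarrow> r k \<le> l j \<or> r j \<le> l k) \<Longrightarrow>
        (\<Sum>k<n. r k - l k) < \<delta>
        \<Longrightarrow> (\<Sum>k<n. norm (\<phi> (r k) - \<phi> (l k))) < e"
    using abs_contD[OF ac e] by blast
  have cont: "continuous_on {a..b} \<phi>" by (rule abs_cont_imp_cont[OF ac])
  have Nl: "N \<in> sets lebesgue" using N(1) negligible_iff_null_sets by blast
  obtain Op where Op: "open Op" "N \<subseteq> Op" "(Op - N) \<in> lmeasurable" "emeasure lebesgue (Op - N) < ennreal \<delta>"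
    using sets_lebesgue_outer_open[OF Nl \<delta>] by blast
  define Op' where "Op' = Op \<inter> {a<..<b}"
  have Op'open: "open Op'" using Op(1) by (simp add: Op'_def open_Int)
  have NO': "N \<subseteq> Op'" using Op(2) N(2) by (auto simp: Op'_def)
  have Op'sub: "Op' \<subseteq> {a<..<b}" by (auto simp: Op'_def)
  have Op'meas: "Op' \<in> lmeasurable"
    using lmeasurable_open[OF bounded_subset[OF bounded_Ioo Op'sub] Op'open] .
  have Nm: "N \<in> lmeasurable" using N(1) negligible_imp_measurable by blast
  have ONm: "(Op - N) \<union> N \<in> lmeasurable" using Op(3) Nm by (rule fmeasurable.Un)
  have "measure lebesgue (Op - N) < \<delta>"
    using Op(4) emeasure_eq_measure2[OF Op(3)] \<delta> by (simp add: ennreal_less_iff)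
  moreover have "measure lebesgue ((Op - N) \<union> N) \<le> measure lebesgue (Op - N) + measure lebesgue N"
    using Op(3) Nm by (intro measure_Un_le) (auto dest: fmeasurableD)
  moreover have "measure lebesgue N = 0" using N(1) negligible_imp_measure0 by blast
  moreover have "measure lebesgue Op' \<le> measure lebesgue ((Op - N) \<union> N)"
    by (rule measure_mono_fmeasurable[OF _ fmeasurableD[OF Op'meas] ONm]) (use Op'_def in auto)
  ultimately have mO': "measure lebesgue Op' < \<delta>" by linarith
  define \<C> where "\<C> = components Op'"
  have Copen: "open C" if "C \<in> \<C>" for C
    using that open_components[OF Op'open] unfolding \<C>_def by blast
  have Cconn: "connected C" if "C \<in> \<C>" for C
    using that in_components_connected unfolding \<C>_def by blast
  have Cne: "C \<noteq> {}" if "C \<in> \<C>" for C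
    using that in_components_nonempty unfolding \<C>_def by blast
  have Csub: "C \<subseteq> Op'" if "C \<in> \<C>" for C
    using that in_components_subset unfolding \<C>_def by blast
  have Ceq: "C = {Inf C<..<Sup C}" if "C \<in> \<C>" for C
    using open_conn_real_eq[OF Copen[OF that] Cconn[OF that] Cne[OF that]]
      bounded_subset[OF bounded_Ioo order_trans[OF Csub[OF that] Op'sub]] by blast
  have Cmem: "x \<in> C \<longleftrightarrow> Inf C < x \<and> x < Sup C" if "C \<in> \<C>" for C x
    by (rule ioo_mem[OF Ceq[OF that]])
  have Clt: "Inf C < Sup C" and Cab: "a \<le> Inf C" "Sup C \<le> b" if C: "C \<in> \<C>" for C
  proof -
    obtain x where "x \<in> C" using Cne[OF C] by blast
    then show lt: "Inf C < Sup C" using Cmem[OF C] by force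
    have "{Inf C<..<Sup C} \<subseteq> {a<..<b}"
    proof
      fix x assume "x \<in> {Inf C<..<Sup C}"
      then have "x \<in> C" using Cmem[OF C] by simp
      then show "x \<in> {a<..<b}" using Csub[OF C] Op'sub by blast
    qed
    then show "a \<le> Inf C" "Sup C \<le> b" using lt by (simp_all add: greaterThanLessThan_subseteq_greaterThanLessThan)
  qed
  have Cmeas: "measure lebesgue C = Sup C - Inf C" if "C \<in> \<C>" for C
    using ioo_meas[OF Ceq[OF that]] Clt[OF that] by simp
  have Cdisj: "Sup C \<le> Inf C' \<or> Sup C' \<le> Inf C" if "C \<in> \<C>" "C' \<in> \<C>" "C \<noteq> C'" for C C'
  proof -
    have "C \<inter> C' = {}" using pairwise_disjoint_components that unfolding \<C>_def pairwise_def by blast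
    then show ?thesis using ioo_disj[OF Ceq[OF that(1)] Ceq[OF that(2)] _ Clt[OF that(1)] Clt[OF that(2)]] by blast
  qed
  have Ccont: "continuous_on {Inf C..Sup C} \<phi>" if "C \<in> \<C>" for C
    using continuous_on_subset[OF cont] Cab[OF that] by auto
  have "\<forall>C\<in>\<C>. \<exists>p\<in>{Inf C..Sup C}. \<forall>t\<in>{Inf C..Sup C}. \<phi> p \<le> \<phi> t"
    using continuous_attains_inf[OF compact_Icc _ Ccont] Clt by fastforce
  then obtain p where p: "\<And>C. C \<in> \<C> \<Longrightarrow> p C \<in> {Inf C..Sup C} \<and> (\<forall>t\<in>{Inf C..Sup C}. \<phi> (p C) \<le> \<phi> t)"
    by metis
  have "\<forall>C\<in>\<C>. \<exists>q\<in>{Inf C..Sup C}. \<forall>t\<in>{Inf C..Sup C}. \<phi> t \<le> \<phi> q"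
    using continuous_attains_sup[OF compact_Icc _ Ccont] Clt by fastforce
  then obtain q where q: "\<And>C. C \<in> \<C> \<Longrightarrow> q C \<in> {Inf C..Sup C} \<and> (\<forall>t\<in>{Inf C..Sup C}. \<phi> t \<le> \<phi> (q C))"
    by metis
  define T where "T C = {\<phi> (p C)..\<phi> (q C)}" for C
  have cntC: "countable \<C>"
  proof (rule countable_disjoint_open_subsets)
    show "\<And>S. S \<in> \<C> \<Longrightarrow> open S" by (rule Copen)
    show "pairwise disjnt \<C>" using pairwise_disjoint_components unfolding \<C>_def pairwise_def disjnt_def by blast
  qed
  have Tm: "T C \<in> lmeasurable" for C unfolding T_def by simp
  have bound: "measure lebesgue (\<Union>C\<in>F. T C) \<le> e" if F: "F \<subseteq> \<C>" "finite F" for F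
  proof -
    define L where "L C = min (p C) (q C)" for C
    define R where "R C = max (p C) (q C)" for C
    have mT: "measure lebesgue (T C) = norm (\<phi> (R C) - \<phi> (L C))" if "C \<in> \<C>" for C
    proof -
      have "\<phi> (p C) \<le> \<phi> (q C)" using p[OF that] q[OF that] by blast
      then show ?thesis unfolding T_def L_def R_def by (simp add: min_def max_def)
    qed
    obtain h where h: "bij_betw h {0..<card F} F" using ex_bij_betw_nat_finite[OF F(2)] by blast
    have hF: "h k \<in> F" if "k < card F" for k using h that by (auto simp: bij_betw_def)
    have hinj: "h k \<noteq> h j" if "k < card F" "j < card F" "k \<noteq> j" for k j
      using h that by (auto simp: bij_betw_def inj_on_def)
    have LR: "Inf C \<le> L C" "L C \<le> R C" "R C \<le> Sup C" if "C \<in> \<C>" for C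
      using p[OF that] q[OF that] by (auto simp: L_def R_def)
    have sumF: "(\<Sum>k<card F. f (h k)) = (\<Sum>C\<in>F. f C)" for f :: "real set \<Rightarrow> real"
      using sum.reindex_bij_betw[OF h, of f] by (simp add: atLeast0LessThan)
    have "(\<Sum>C\<in>F. R C - L C) \<le> (\<Sum>C\<in>F. Sup C - Inf C)"
      by (rule sum_mono) (use LR F in force)
    also have "\<dots> = (\<Sum>C\<in>F. measure lebesgue C)"
      by (rule sum.cong) (use Cmeas F in auto)
    also have "\<dots> = measure lebesgue (\<Union>F)"
    proof (rule measure_Union'[symmetric, OF F(2)])
      show "\<And>S. S \<in> F \<Longrightarrow> S \<in> lmeasurable"
        using F by (blast intro: ioo_lmeas[OF Ceq])
      show "pairwise disjnt F" using pairwise_disjoint_components F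
        unfolding \<C>_def pairwise_def disjnt_def by blast
    qed
    also have "\<dots> \<le> measure lebesgue Op'"
    proof (rule measure_mono_fmeasurable[OF _ _ Op'meas])
      show UF: "\<Union>F \<subseteq> Op'" using F Csub by blast
      have "\<Union>F \<in> lmeasurable"
        by (rule lmeasurable_open) (use UF Op'sub F Copen in \<open>auto intro!: bounded_subset[OF bounded_Ioo] open_Union\<close>)
      then show "\<Union>F \<in> sets lebesgue" by (rule fmeasurableD)
    qed
    finally have sumLR: "(\<Sum>C\<in>F. R C - L C) < \<delta>" using mO' by linarith
    have "(\<Sum>k<card F. norm (\<phi> (R (h k)) - \<phi> (L (h k)))) < e"
    proof (rule H[of "card F" "\<lambda>k. L (h k)" "\<lambda>k. R (h k)"])
      show "\<forall>k<card F. a \<le> L (h k) \<and> L (h k) \<le> R (h k) \<and> R (h k) \<le> b"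
        using hF F LR Cab by (meson order_trans subsetD)
      show "\<forall>k<card F. \<forall>j<card F. k \<noteq> j \<longrightarrow> R (h k) \<le> L (h j) \<or> R (h j) \<le> L (h k)"
      proof (intro allI impI)
        fix k j assume kj: "k < card F" "j < card F" "k \<noteq> j"
        have inC: "h k \<in> \<C>" "h j \<in> \<C>" using hF kj F by auto
        show "R (h k) \<le> L (h j) \<or> R (h j) \<le> L (h k)"
          using Cdisj[OF inC hinj[OF kj]] LR[OF inC(1)] LR[OF inC(2)] by linarith
      qed
      show "(\<Sum>k<card F. R (h k) - L (h k)) < \<delta>"
        using sumLR sumF[of "\<lambda>C. R C - L C"] by simp
    qed
    then have "(\<Sum>C\<in>F. measure lebesgue (T C)) < e"
      using sumF[of "\<lambda>C. norm (\<phi> (R C) - \<phi> (L C))"] mT F by (simp add: subset_iff)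
    moreover have "measure lebesgue (\<Union>C\<in>F. T C) \<le> (\<Sum>C\<in>F. measure lebesgue (T C))"
      by (rule measure_UNION_le[OF F(2)]) (use Tm in \<open>auto dest: fmeasurableD\<close>)
    ultimately show ?thesis by linarith
  qed
  have sub: "\<phi> ` N \<subseteq> (\<Union>C\<in>\<C>. T C)"
  proof
    fix v assume "v \<in> \<phi> ` N"
    then obtain x where x: "x \<in> N" "v = \<phi> x" by blast
    then have "x \<in> \<Union>\<C>" using NO' by (auto simp: \<C>_def)
    then obtain C where C: "C \<in> \<C>" "x \<in> C" by blast
    then have "x \<in> {Inf C..Sup C}" using Cmem[OF C(1)] by auto
    then have "v \<in> T C" using p[OF C(1)] q[OF C(1)] x by (auto simp: T_def)
    then show "v \<in> (\<Union>C\<in>\<C>. T C)" using C by blast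
  qed
  show "\<exists>T. \<phi> ` N \<subseteq> T \<and> T \<in> lmeasurable \<and> measure lebesgue T \<le> e"
    using sub fmeasurable_UN_bound[OF cntC Tm bound] measure_UN_bound[OF cntC Tm bound] by blast
qed

lemma ac_mono_strict:
  fixes \<phi> :: "real \<Rightarrow> real"
  assumes ac: "abs_cont_on a b \<phi>" and ab: "a \<le> b" and N: "negligible N"
    and der: "\<And>t. t \<in> {a<..<b} - N \<Longrightarrow> \<exists>D>0. (\<phi> has_real_derivative D) (at t)"
  shows "\<phi> a \<le> \<phi> b"
proof (rule ccontr)
  assume "\<not> \<phi> a \<le> \<phi> b"
  then have lt: "\<phi> b < \<phi> a" by simp
  then have ab': "a < b" using ab by (cases "a = b") auto
  have cont: "continuous_on {a..b} \<phi>" by (rule abs_cont_imp_cont[OF ac])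
  have sub: "{\<phi> b<..<\<phi> a} \<subseteq> \<phi> ` (N \<inter> {a<..<b})"
  proof
    fix c assume c: "c \<in> {\<phi> b<..<\<phi> a}"
    define T where "T = {t\<in>{a..b}. c \<le> \<phi> t}"
    have "T = {a..b} \<inter> \<phi> -` {c..}" by (auto simp: T_def)
    then have Tcl: "closed T" using continuous_closed_preimage[OF cont closed_atLeastAtMost closed_atLeast] by simp
    have aT: "a \<in> T" using c ab by (auto simp: T_def)
    have Tb: "bdd_above T" by (rule bdd_aboveI[of _ b]) (auto simp: T_def)
    define t0 where "t0 = Sup T"
    have t0T: "t0 \<in> T" unfolding t0_def using closed_contains_Sup[OF _ Tb Tcl] aT by blast
    have upper: "t \<le> t0" if "t \<in> T" for t unfolding t0_def using cSup_upper[OF that Tb] .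
    have t0ab: "a \<le> t0" "t0 \<le> b" using t0T by (auto simp: T_def)
    have ct0: "c \<le> \<phi> t0" using t0T by (auto simp: T_def)
    have t0b: "t0 \<noteq> b" using ct0 c by auto
    have eq: "\<phi> t0 = c"
    proof (rule ccontr)
      assume "\<phi> t0 \<noteq> c"
      then have gt: "c < \<phi> t0" using ct0 by simp
      obtain d where d: "d > 0" "\<And>x. x \<in> {a..b} \<Longrightarrow> dist x t0 < d \<Longrightarrow> dist (\<phi> x) (\<phi> t0) < \<phi> t0 - c"
        using cont[unfolded continuous_on_iff] t0ab gt by (metis atLeastAtMost_iff diff_gt_0_iff_gt)
      define s where "s = min b (t0 + d/2)"
      have s: "s \<in> {a..b}" "t0 < s" "dist s t0 < d" using t0ab t0b d(1) by (auto simp: s_def dist_real_def)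
      then have "dist (\<phi> s) (\<phi> t0) < \<phi> t0 - c" using d(2) by blast
      then have "c \<le> \<phi> s" by (auto simp: dist_real_def)
      then have "s \<in> T" using s by (auto simp: T_def)
      then show False using upper s by fastforce
    qed
    have t0a: "t0 \<noteq> a" using eq c by auto
    have t0N: "t0 \<in> N"
    proof (rule ccontr)
      assume "t0 \<notin> N"
      then obtain D where D: "D > 0" "(\<phi> has_real_derivative D) (at t0)"
        using der[of t0] t0ab t0a t0b by force
      obtain d where d: "d > 0" "\<And>h. h > 0 \<Longrightarrow> h < d \<Longrightarrow> \<phi> t0 < \<phi> (t0 + h)"
        using DERIV_pos_inc_right[OF D(2) D(1)] by blast
      define h where "h = min (d/2) ((b - t0)/2)"
      have h: "h > 0" "h < d" "t0 + h \<in> {a..b}" using d(1) t0ab t0b by (auto simp: h_def min_def field_simps)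
      then have "c \<le> \<phi> (t0 + h)" using d(2)[of h] eq by simp
      then have "t0 + h \<in> T" using h by (auto simp: T_def)
      then show False using upper h by fastforce
    qed
    show "c \<in> \<phi> ` (N \<inter> {a<..<b})"
      using t0N t0ab t0a t0b eq by (auto intro!: image_eqI[of _ _ t0])
  qed
  have "negligible (\<phi> ` (N \<inter> {a<..<b}))"
    by (rule luzin[OF ac]) (auto intro: negligible_subset[OF N])
  then have "negligible {\<phi> b<..<\<phi> a}" using sub negligible_subset by blast
  then have "measure lebesgue {\<phi> b<..<\<phi> a} = 0" by (rule negligible_imp_measure0)
  then show False using lt by simp
qed

lemma ac_mono:
  fixes \<phi> :: "real \<Rightarrow> real"
  assumes ac: "abs_cont_on a b \<phi>" and ab: "a \<le> b" and N: "negligible N"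
    and der: "\<And>t. t \<in> {a<..<b} - N \<Longrightarrow> \<exists>D\<ge>0. (\<phi> has_real_derivative D) (at t)"
  shows "\<phi> a \<le> \<phi> b"
proof -
  have key: "\<phi> a + \<epsilon> * a \<le> \<phi> b + \<epsilon> * b" if e: "\<epsilon> > 0" for \<epsilon>
  proof (rule ac_mono_strict[OF abs_cont_add_lin[OF ac e] ab N])
    fix t assume "t \<in> {a<..<b} - N"
    then obtain D where D: "D \<ge> 0" "(\<phi> has_real_derivative D) (at t)" using der by blast
    have "((\<lambda>t. \<phi> t + \<epsilon> * t) has_real_derivative D + \<epsilon>) (at t)"
      by (auto intro!: derivative_eq_intros D(2))
    then show "\<exists>D>0. ((\<lambda>t. \<phi> t + \<epsilon> * t) has_real_derivative D) (at t)" using D(1) e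
      by (intro exI[of _ "D + \<epsilon>"]) auto
  qed
  show ?thesis
  proof (rule ccontr)
    assume "\<not> \<phi> a \<le> \<phi> b"
    then have gap: "\<phi> a - \<phi> b > 0" by simp
    define \<epsilon> where "\<epsilon> = (\<phi> a - \<phi> b) / (2 * (b - a + 1))"
    have e: "\<epsilon> > 0" using gap ab by (simp add: \<epsilon>_def)
    have "\<epsilon> * (b - a) < \<epsilon> * (2 * (b - a + 1))" using e ab by (intro mult_strict_left_mono) auto
    also have "\<dots> = \<phi> a - \<phi> b" using ab by (simp add: \<epsilon>_def)
    finally show False using key[OF e] by (simp add: algebra_simps)
  qed
qed

lemma comp_mono:
  fixes e :: "'a::euclidean_space \<Rightarrow> real" and ge :: "'a \<Rightarrow> 'a" and y :: "real \<Rightarrow> 'a"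
    and f :: "'u::topological_space \<Rightarrow> 'a \<Rightarrow> 'b \<Rightarrow> 'a"
  assumes e_der: "\<And>x. (e has_derivative (\<lambda>h. ge x \<bullet> h)) (at x)"
    and ge_cont: "continuous_on UNIV ge"
    and Y: "compact Y"
    and adm: "admissible_pair U Y f z S u y"
    and nonneg: "\<And>uu yy. uu \<in> U \<Longrightarrow> yy \<in> Y \<Longrightarrow> 0 \<le> ge yy \<bullet> f uu yy z"
    and S: "S \<ge> 0"
  shows "e (y 0) \<le> e (y S)"
proof -
  have acy: "abs_cont_on 0 S y"
    and ae: "AE t in lebesgue. t \<in> {0..S} \<longrightarrow> (y has_vector_derivative f (u t) (y t) z) (at t)"
    and inUY: "\<And>t. t \<in> {0..S} \<Longrightarrow> u t \<in> U \<and> y t \<in> Y"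
    using adm unfolding admissible_pair_def by auto
  obtain R x0 where R: "Y \<subseteq> cball x0 R" using compact_imp_bounded[OF Y] bounded_subset_cball by blast
  have "bounded (ge ` cball x0 R)"
    by (rule compact_imp_bounded, rule compact_continuous_image)
       (auto intro: continuous_on_subset[OF ge_cont])
  then obtain B where B: "B > 0" "\<And>x. x \<in> cball x0 R \<Longrightarrow> norm (ge x) \<le> B"
    unfolding bounded_pos by blast
  have lip: "norm (e x - e x') \<le> B * norm (x - x')" if "x \<in> cball x0 R" "x' \<in> cball x0 R" for x x'
  proof (rule differentiable_bound[OF convex_cball _ _ that])
    show "(e has_derivative (\<lambda>h. ge x \<bullet> h)) (at x within cball x0 R)" for x
      by (rule has_derivative_at_withinI[OF e_der])
    show "onorm (\<lambda>h. ge x \<bullet> h) \<le> B" if "x \<in> cball x0 R" for x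
    proof (rule onorm_le)
      fix h
      have "norm (ge x \<bullet> h) \<le> norm (ge x) * norm h" using Cauchy_Schwarz_ineq2 by simp
      also have "\<dots> \<le> B * norm h" using B(2)[OF that] by (simp add: mult_right_mono)
      finally show "norm (ge x \<bullet> h) \<le> B * norm h" .
    qed
  qed
  have ac: "abs_cont_on 0 S (\<lambda>t. e (y t))"
    unfolding abs_cont_on_def
  proof (intro allI impI)
    fix \<epsilon> :: real assume \<epsilon>: "\<epsilon> > 0"
    then have "\<epsilon> / B > 0" using B by simp
    then obtain d where d: "d > 0" and H: "\<And>(n::nat) l r. (\<forall>k<n. 0 \<le> l k \<and> l k \<le> r k \<and> r k \<le> S) \<Longrightarrow>
        (\<forall>k<n. \<forall>j<n. k \<noteq> j \<longrightarrow> r k \<le> l j \<or> r j \<le> l k) \<Longrightarrow>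
        (\<Sum>k<n. r k - l k) < d
        \<Longrightarrow> (\<Sum>k<n. norm (y (r k) - y (l k))) < \<epsilon> / B"
      using abs_contD[OF acy] by blast
    show "\<exists>d>0. \<forall>(n::nat) l r. (\<forall>k<n. 0 \<le> l k \<and> l k \<le> r k \<and> r k \<le> S) \<and>
        (\<forall>k<n. \<forall>j<n. k \<noteq> j \<longrightarrow> r k \<le> l j \<or> r j \<le> l k) \<and>
        (\<Sum>k<n. r k - l k) < d
        \<longrightarrow> (\<Sum>k<n. norm (e (y (r k)) - e (y (l k)))) < \<epsilon>"
    proof (intro exI[of _ d] conjI allI impI d)
      fix n :: nat and l r
      assume A: "(\<forall>k<n. 0 \<le> l k \<and> l k \<le> r k \<and> r k \<le> S) \<and>
        (\<forall>k<n. \<forall>j<n. k \<noteq> j \<longrightarrow> r k \<le> l j \<or> r j \<le> l k) \<and>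
        (\<Sum>k<n. r k - l k) < d"
      have 1: "(\<Sum>k<n. norm (y (r k) - y (l k))) < \<epsilon> / B" by (rule H[of n l r]) (use A in auto)
      have "(\<Sum>k<n. norm (e (y (r k)) - e (y (l k)))) \<le> (\<Sum>k<n. B * norm (y (r k) - y (l k)))"
      proof (rule sum_mono)
        fix k assume "k \<in> {..<n}"
        then have "r k \<in> {0..S}" "l k \<in> {0..S}" using A by auto
        then have "y (r k) \<in> cball x0 R" "y (l k) \<in> cball x0 R" using inUY R by blast+
        then show "norm (e (y (r k)) - e (y (l k))) \<le> B * norm (y (r k) - y (l k))" by (rule lip)
      qed
      also have "\<dots> = B * (\<Sum>k<n. norm (y (r k) - y (l k)))" by (simp add: sum_distrib_left)
      also have "\<dots> < B * (\<epsilon> / B)" using 1 B(1) by (intro mult_strict_left_mono) auto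
      also have "\<dots> = \<epsilon>" using B(1) by simp
      finally show "(\<Sum>k<n. norm (e (y (r k)) - e (y (l k)))) < \<epsilon>" .
    qed
  qed
  from ae obtain N where N: "{t \<in> space lebesgue. \<not> (t \<in> {0..S} \<longrightarrow> (y has_vector_derivative f (u t) (y t) z) (at t))} \<subseteq> N"
    "emeasure lebesgue N = 0" "N \<in> sets lebesgue"
    by (rule AE_E)
  have "N \<in> null_sets lebesgue" using N(2,3) by (rule null_setsI)
  then have negN: "negligible N" using negligible_iff_null_sets by blast
  show ?thesis
  proof (rule ac_mono[OF ac S negN])
    fix t assume t: "t \<in> {0<..<S} - N"
    have yd: "(y has_vector_derivative f (u t) (y t) z) (at t)"
    proof (rule ccontr)
      assume nd: "\<not> (y has_vector_derivative f (u t) (y t) z) (at t)"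
      have "t \<in> {t \<in> space lebesgue. \<not> (t \<in> {0..S} \<longrightarrow> (y has_vector_derivative f (u t) (y t) z) (at t))}"
        using t nd by simp
      then have "t \<in> N" by (rule subsetD[OF N(1)])
      then show False using t by simp
    qed
    have UY: "u t \<in> U" "y t \<in> Y" using inUY[of t] t by auto
    have "((e \<circ> y) has_derivative ((\<lambda>h. ge (y t) \<bullet> h) \<circ> (\<lambda>h. h *\<^sub>R f (u t) (y t) z))) (at t)"
      by (rule diff_chain_at[OF yd[unfolded has_vector_derivative_def] e_der])
    moreover have "((\<lambda>h. ge (y t) \<bullet> h) \<circ> (\<lambda>h. h *\<^sub>R f (u t) (y t) z)) = (*) (ge (y t) \<bullet> f (u t) (y t) z)"
      by (auto simp: fun_eq_iff)
    ultimately have "((\<lambda>t. e (y t)) has_real_derivative (ge (y t) \<bullet> f (u t) (y t) z)) (at t)"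
      unfolding has_field_derivative_def by (simp add: o_def)
    then show "\<exists>D\<ge>0. ((\<lambda>t. e (y t)) has_real_derivative D) (at t)"
      using nonneg[OF UY] by blast
  qed
qed

lemma subseq_conv:
  fixes X :: "nat \<Rightarrow> nat \<Rightarrow> real"
  assumes "\<And>k i. i \<in> {1..M} \<Longrightarrow> \<bar>X k i\<bar> \<le> C"
  shows "\<exists>r L. strict_mono r \<and> (\<forall>i\<in>{1..M}. (\<lambda>k. X (r k) i) \<longlonglongrightarrow> L i)"
  using assms
proof (induction M)
  case 0
  show ?case by (intro exI[of _ id] exI[of _ "\<lambda>_. 0"]) (auto simp: strict_mono_def)
next
  case (Suc M)
  then obtain r L where r: "strict_mono r" "\<forall>i\<in>{1..M}. (\<lambda>k. X (r k) i) \<longlonglongrightarrow> L i" by force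
  have "bounded (range (\<lambda>k. X (r k) (Suc M)))"
    using Suc.prems[of "Suc M"] by (auto simp: bounded_iff)
  then obtain l r2 where r2: "strict_mono r2" "((\<lambda>k. X (r k) (Suc M)) \<circ> r2) \<longlonglongrightarrow> l"
    using bounded_imp_convergent_subsequence by blast
  show ?case
  proof (intro exI[of _ "r \<circ> r2"] exI[of _ "L(Suc M := l)"] conjI ballI)
    show "strict_mono (r \<circ> r2)" using r(1) r2(1) by (rule strict_mono_o)
    fix i assume i: "i \<in> {1..Suc M}"
    show "(\<lambda>k. X ((r \<circ> r2) k) i) \<longlonglongrightarrow> (L(Suc M := l)) i"
    proof (cases "i = Suc M")
      case True then show ?thesis using r2(2) by (simp add: o_def)
    next
      case False
      then have "i \<in> {1..M}" using i by auto
      then have "((\<lambda>k. X (r k) i) \<circ> r2) \<longlonglongrightarrow> L i" using r(2) LIMSEQ_subseq_LIMSEQ r2(1) by blast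
      then show ?thesis using False by (simp add: o_def)
    qed
  qed
qed

lemma key:
  fixes U :: "'u::metric_space set" and Y :: "'a::euclidean_space set"
    and f :: "'u \<Rightarrow> 'a \<Rightarrow> 'b \<Rightarrow> 'a"
    and phi :: "nat \<Rightarrow> 'a \<Rightarrow> real" and gphi :: "nat \<Rightarrow> 'a \<Rightarrow> 'a" and v :: "nat \<Rightarrow> real"
  assumes Y: "compact Y"
    and phi_deriv: "\<And>i y. (phi i has_derivative (\<lambda>v. gphi i y \<bullet> v)) (at y)"
    and gphi_cont: "\<And>i. continuous_on UNIV (gphi i)"
    and lin_indep: "\<And>(K::nat) (W::'a set) (w::nat \<Rightarrow> real).
                      open W \<Longrightarrow> W \<noteq> {} \<Longrightarrow>
                      (\<forall>y\<in>W. (\<Sum>i=1..K. w i *\<^sub>R gphi i y) = 0) \<Longrightarrow>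
                      \<forall>i\<in>{1..K}. w i = 0"
    and Y0: "Y0 \<subseteq> Y" "interior (closure Y0) \<noteq> {}"
    and ctrl: "\<forall>y' \<in> Y0. \<forall>y'' \<in> Y0. \<exists>S>0. \<exists>u y.
                 admissible_pair U Y f z S u y \<and> y 0 = y' \<and> y S = y''"
    and nonneg: "\<And>uu yy. uu \<in> U \<Longrightarrow> yy \<in> Y \<Longrightarrow> 0 \<le> (\<Sum>i=1..M. v i *\<^sub>R gphi i yy) \<bullet> f uu yy z"
  shows "\<forall>i\<in>{1..M}. v i = 0"
proof -
  define e where "e x = (\<Sum>i=1..M. v i * phi i x)" for x
  define ge where "ge x = (\<Sum>i=1..M. v i *\<^sub>R gphi i x)" for x
  have e_der: "(e has_derivative (\<lambda>h. ge x \<bullet> h)) (at x)" for x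
  proof -
    have "((\<lambda>x. \<Sum>i=1..M. v i * phi i x) has_derivative (\<lambda>h. \<Sum>i=1..M. v i * (gphi i x \<bullet> h))) (at x)"
      by (intro has_derivative_sum has_derivative_mult_right phi_deriv)
    moreover have "(\<lambda>h. \<Sum>i=1..M. v i * (gphi i x \<bullet> h)) = (\<lambda>h. ge x \<bullet> h)"
      by (simp add: fun_eq_iff ge_def inner_sum_left)
    ultimately show ?thesis by (simp add: e_def[abs_def])
  qed
  have ge_cont: "continuous_on UNIV ge"
    unfolding ge_def[abs_def] by (intro continuous_on_sum continuous_on_scaleR continuous_on_const gphi_cont)
  have e_cont: "continuous_on UNIV e"
    by (intro continuous_at_imp_continuous_on ballI has_derivative_continuous[OF e_der])
  have le: "e y' \<le> e y''" if yy: "y' \<in> Y0" "y'' \<in> Y0" for y' y''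
  proof -
    obtain S u y where S: "S > 0" "admissible_pair U Y f z S u y" "y 0 = y'" "y S = y''"
      using ctrl yy by blast
    have "e (y 0) \<le> e (y S)"
      by (rule comp_mono[OF e_der ge_cont Y S(2)]) (use nonneg S(1) in \<open>auto simp: ge_def\<close>)
    then show ?thesis using S by simp
  qed
  have "Y0 \<noteq> {}" using Y0(2) by auto
  then obtain y0 where y0: "y0 \<in> Y0" by blast
  define c where "c = e y0"
  have "Y0 \<subseteq> {x \<in> UNIV. e x = c}"
  proof
    fix x assume x: "x \<in> Y0"
    have "e x = c" unfolding c_def using le[OF x y0] le[OF y0 x] by (rule antisym)
    then show "x \<in> {x \<in> UNIV. e x = c}" by simp
  qed
  moreover have "closed {x \<in> UNIV. e x = c}" by (rule continuous_closed_preimage_constant[OF e_cont closed_UNIV])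
  ultimately have cl: "closure Y0 \<subseteq> {x \<in> UNIV. e x = c}" by (rule closure_minimal)
  define W where "W = interior (closure Y0)"
  have W: "open W" "W \<noteq> {}" using Y0(2) by (auto simp: W_def)
  have eW: "e x = c" if "x \<in> W" for x using cl interior_subset[of "closure Y0"] that unfolding W_def by blast
  have gz: "ge x = 0" if x: "x \<in> W" for x
  proof -
    have "(e has_derivative (\<lambda>h. 0)) (at x)"
      by (rule has_derivative_transform_within_open[OF has_derivative_const[of c] W(1) x]) (use eW in auto)
    then have "(\<lambda>h. ge x \<bullet> h) = (\<lambda>h. 0)" by (rule has_derivative_unique[OF e_der])
    then have "(\<lambda>h. ge x \<bullet> h) (ge x) = (\<lambda>h. 0) (ge x)" by (rule fun_cong)
    then have "ge x \<bullet> ge x = 0" by simp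
    then show ?thesis by simp
  qed
  have "\<forall>x\<in>W. (\<Sum>i=1..M. v i *\<^sub>R gphi i x) = 0" using gz unfolding ge_def by blast
  then show ?thesis by (rule lin_indep[OF W])
qed

theorem proposition8p4:
  fixes U :: "'u::metric_space set"
    and Y :: "'a::euclidean_space set" and Z :: "'b::euclidean_space set"
    and f :: "'u \<Rightarrow> 'a \<Rightarrow> 'b \<Rightarrow> 'a" and g :: "'u \<Rightarrow> 'a \<Rightarrow> 'b \<Rightarrow> 'b"
    and G :: "'u \<Rightarrow> 'a \<Rightarrow> 'b \<Rightarrow> real"
    and phi :: "nat \<Rightarrow> 'a \<Rightarrow> real" and gphi :: "nat \<Rightarrow> 'a \<Rightarrow> 'a"
    and zeta :: "'b \<Rightarrow> real" and gzeta :: "'b \<Rightarrow> 'b"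
    and M :: nat and z :: 'b and Y0 :: "'a set"
  assumes U: "compact U"
    and Y: "compact Y" and Z: "compact Z"
    and f_cont: "continuous_on (U \<times> UNIV \<times> UNIV) (\<lambda>(u, y, z). f u y z)"
    and g_cont: "continuous_on (U \<times> UNIV \<times> UNIV) (\<lambda>(u, y, z). g u y z)"
    and f_lip: "\<exists>L. \<forall>u\<in>U. \<forall>y1 y2 z1 z2.
                  dist (f u y1 z1) (f u y2 z2) \<le> L * dist (y1, z1) (y2, z2)"
    and g_lip: "\<exists>L. \<forall>u\<in>U. \<forall>y1 y2 z1 z2.
                  dist (g u y1 z1) (g u y2 z2) \<le> L * dist (y1, z1) (y2, z2)"
    and G_cont: "continuous_on (U \<times> UNIV \<times> UNIV) (\<lambda>(u, y, z). G u y z)"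
    and phi_deriv: "\<And>i y. (phi i has_derivative (\<lambda>v. gphi i y \<bullet> v)) (at y)"
    and gphi_cont: "\<And>i. continuous_on UNIV (gphi i)"
    and lin_indep: "\<And>(K::nat) (W::'a set) (w::nat \<Rightarrow> real).
                      open W \<Longrightarrow> W \<noteq> {} \<Longrightarrow>
                      (\<forall>y\<in>W. (\<Sum>i=1..K. w i *\<^sub>R gphi i y) = 0) \<Longrightarrow>
                      \<forall>i\<in>{1..K}. w i = 0"
    and zeta_deriv: "\<And>x. (zeta has_derivative (\<lambda>v. gzeta x \<bullet> v)) (at x)"
    and gzeta_cont: "continuous_on UNIV gzeta"
    and z: "z \<in> Z"
    and Y0: "Y0 \<subseteq> Y" "interior (closure Y0) \<noteq> {}"
    and ctrl: "\<forall>y' \<in> Y0. \<forall>y'' \<in> Y0. \<exists>S>0. \<exists>u y.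
                 admissible_pair U Y f z S u y \<and> y 0 = y' \<and> y S = y''"
  shows "\<exists>\<omega>::nat \<Rightarrow> real. \<forall>u\<in>U. \<forall>y\<in>Y.
           sigma_star U Y f g G gphi gzeta M z
             \<le> ereal (G u y z + gzeta z \<bullet> g u y z + (\<Sum>i=1..M. \<omega> i *\<^sub>R gphi i y) \<bullet> f u y z)"
proof -
  define h where "h \<omega> uu yy = G uu yy z + gzeta z \<bullet> g uu yy z + (\<Sum>i=1..M. \<omega> i *\<^sub>R gphi i yy) \<bullet> f uu yy z"
    for \<omega> :: "nat \<Rightarrow> real" and uu yy
  define a where "a uu yy = G uu yy z + gzeta z \<bullet> g uu yy z" for uu yy
  define b where "b i uu yy = gphi i yy \<bullet> f uu yy z" for i uu yy
  define lin where "lin \<omega> uu yy = (\<Sum>i=1..M. \<omega> i * b i uu yy)" for \<omega> :: "nat \<Rightarrow> real" and uu yy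
  define nrm where "nrm \<omega> = (\<Sum>i=1..M. \<bar>\<omega> i\<bar>)" for \<omega> :: "nat \<Rightarrow> real"
  have hlin: "h \<omega> uu yy = a uu yy + lin \<omega> uu yy" for \<omega> uu yy
    by (simp add: h_def a_def lin_def b_def inner_sum_left)
  have linI: "lin \<omega> uu yy = (\<Sum>i=1..M. \<omega> i *\<^sub>R gphi i yy) \<bullet> f uu yy z" for \<omega> uu yy
    by (simp add: lin_def b_def inner_sum_left)
  have coord_le: "\<bar>\<omega> i\<bar> \<le> nrm \<omega>" if "i \<in> {1..M}" for \<omega> i
    unfolding nrm_def by (rule member_le_sum[OF that]) auto
  have lin_tendsto: "(\<lambda>k. lin (X k) uu yy) \<longlonglongrightarrow> lin L uu yy"
    if "\<forall>i\<in>{1..M}. (\<lambda>k. X k i) \<longlonglongrightarrow> L i" for X L uu yy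
    unfolding lin_def by (intro tendsto_sum tendsto_mult_right) (use that in auto)
  have nrm_tendsto: "(\<lambda>k. nrm (X k)) \<longlonglongrightarrow> nrm L"
    if "\<forall>i\<in>{1..M}. (\<lambda>k. X k i) \<longlonglongrightarrow> L i" for X L
    unfolding nrm_def by (intro tendsto_sum tendsto_rabs) (use that in auto)
  define \<Theta> where "\<Theta> = {\<theta>::real. \<exists>\<omega>::nat \<Rightarrow> real. \<forall>u\<in>U. \<forall>y\<in>Y. \<theta> \<le> h \<omega> u y}"
  have \<sigma>: "sigma_star U Y f g G gphi gzeta M z = (SUP \<theta>\<in>\<Theta>. ereal \<theta>)"
    by (simp add: sigma_star_def \<Theta>_def h_def)
  have bnd: "\<exists>B. \<forall>\<omega>. (\<forall>uu\<in>U. \<forall>yy\<in>Y. \<theta>1 \<le> h \<omega> uu yy) \<longrightarrow> nrm \<omega> \<le> B" for \<theta>1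
  proof (rule ccontr)
    assume "\<not> (\<exists>B. \<forall>\<omega>. (\<forall>uu\<in>U. \<forall>yy\<in>Y. \<theta>1 \<le> h \<omega> uu yy) \<longrightarrow> nrm \<omega> \<le> B)"
    then have "\<forall>k::nat. \<exists>\<omega>. (\<forall>uu\<in>U. \<forall>yy\<in>Y. \<theta>1 \<le> h \<omega> uu yy) \<and> real k < nrm \<omega>"
      by (meson not_le)
    then obtain w where w: "\<And>k. \<forall>uu\<in>U. \<forall>yy\<in>Y. \<theta>1 \<le> h (w k) uu yy" "\<And>k. real k < nrm (w k)"
      by metis
    define n where "n k = nrm (w k)" for k
    have npos: "n k > 0" for k using w(2)[of k] unfolding n_def by linarith
    define v where "v k i = w k i / n k" for k i
    have vb: "\<bar>v k i\<bar> \<le> 1" if "i \<in> {1..M}" for k i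
      using coord_le[OF that, of "w k"] npos[of k] by (simp add: v_def n_def abs_divide divide_le_eq_1)
    obtain r L where r: "strict_mono r" "\<forall>i\<in>{1..M}. (\<lambda>k. v (r k) i) \<longlonglongrightarrow> L i"
      using subseq_conv[of M v 1] vb by blast
    have nv: "nrm (v k) = 1" for k
    proof -
      have "nrm (v k) = (\<Sum>i=1..M. \<bar>w k i\<bar>) / n k"
        unfolding nrm_def v_def using npos[of k] by (simp add: abs_divide sum_divide_distrib)
      then show ?thesis using npos[of k] by (simp add: n_def nrm_def)
    qed
    have "(\<lambda>k. nrm (v (r k))) \<longlonglongrightarrow> nrm L" by (rule nrm_tendsto[OF r(2)])
    then have nL: "nrm L = 1" using nv by (simp add: LIMSEQ_const_iff)
    have nlim: "filterlim (\<lambda>k. n (r k)) at_top sequentially"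
    proof (rule filterlim_at_top_mono[OF filterlim_real_sequentially])
      show "\<forall>\<^sub>F k in sequentially. real k \<le> n (r k)"
      proof (rule always_eventually, rule allI)
        fix k
        have "real k \<le> real (r k)" using seq_suble[OF r(1)] by simp
        also have "\<dots> \<le> n (r k)" using w(2)[of "r k"] by (simp add: n_def)
        finally show "real k \<le> n (r k)" .
      qed
    qed
    have nonneg: "0 \<le> (\<Sum>i=1..M. L i *\<^sub>R gphi i yy) \<bullet> f uu yy z" if uy: "uu \<in> U" "yy \<in> Y" for uu yy
    proof -
      have ineq: "(\<theta>1 - a uu yy) / n k \<le> lin (v k) uu yy" for k
      proof -
        have "lin (w k) uu yy = n k * lin (v k) uu yy"
          unfolding lin_def v_def using npos[of k] by (simp add: sum_distrib_left)
        moreover have "\<theta>1 \<le> a uu yy + lin (w k) uu yy" using w(1)[of k] uy hlin by metis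
        ultimately show ?thesis using npos[of k] by (simp add: divide_le_eq mult.commute)
      qed
      have l1: "(\<lambda>k. (\<theta>1 - a uu yy) / n (r k)) \<longlonglongrightarrow> 0"
        by (rule tendsto_divide_0[OF tendsto_const filterlim_at_top_imp_at_infinity[OF nlim]])
      have l2: "(\<lambda>k. lin (v (r k)) uu yy) \<longlonglongrightarrow> lin L uu yy" by (rule lin_tendsto[OF r(2)])
      have "0 \<le> lin L uu yy"
        by (rule tendsto_le[OF trivial_limit_sequentially l2 l1]) (use ineq in auto)
      then show ?thesis by (simp add: linI)
    qed
    have "\<forall>i\<in>{1..M}. L i = 0"
      by (rule key[OF Y phi_deriv gphi_cont lin_indep Y0 ctrl nonneg])
    then have "nrm L = 0" by (simp add: nrm_def)
    then show False using nL by simp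
  qed
  have main: "\<exists>\<omega>. \<forall>u\<in>U. \<forall>y\<in>Y. sigma_star U Y f g G gphi gzeta M z \<le> ereal (h \<omega> u y)"
  proof (cases "\<Theta> = {}")
    case True
    then show ?thesis by (simp add: \<sigma>)
  next
    case False
    then obtain \<theta>0 where \<theta>0: "\<theta>0 \<in> \<Theta>" by blast
    define \<sigma>s where "\<sigma>s = (SUP \<theta>\<in>\<Theta>. ereal \<theta>)"
    have \<theta>0le: "ereal \<theta>0 \<le> \<sigma>s" unfolding \<sigma>s_def using \<theta>0 by (rule SUP_upper)
    obtain B where B: "\<And>\<omega>. (\<forall>uu\<in>U. \<forall>yy\<in>Y. \<theta>0 - 1 \<le> h \<omega> uu yy) \<Longrightarrow> nrm \<omega> \<le> B"
      using bnd[of "\<theta>0 - 1"] by blast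
    define t where "t k = (if \<sigma>s = \<infinity> then real k else real_of_ereal \<sigma>s - 1 / (real k + 1))" for k :: nat
    have tlt: "ereal (t k) < \<sigma>s" for k
    proof (cases \<sigma>s)
      case (real s) then show ?thesis by (simp add: t_def)
    next
      case PInf then show ?thesis by (simp add: t_def)
    next
      case MInf then show ?thesis using \<theta>0le by simp
    qed
    have "\<exists>\<omega>. \<forall>uu\<in>U. \<forall>yy\<in>Y. max (t k) (\<theta>0 - 1) < h \<omega> uu yy" for k
    proof -
      have "ereal (\<theta>0 - 1) < ereal \<theta>0" by simp
      then have "ereal (\<theta>0 - 1) < \<sigma>s" using \<theta>0le by (rule less_le_trans)
      then have "ereal (max (t k) (\<theta>0 - 1)) < \<sigma>s" using tlt[of k] by (simp add: max_def)
      then obtain \<theta> where "\<theta> \<in> \<Theta>" "max (t k) (\<theta>0 - 1) < \<theta>"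
        unfolding \<sigma>s_def less_SUP_iff by auto
      then show ?thesis unfolding \<Theta>_def by (auto intro: less_le_trans)
    qed
    then obtain om where om: "\<And>k. \<forall>uu\<in>U. \<forall>yy\<in>Y. max (t k) (\<theta>0 - 1) < h (om k) uu yy"
      by metis
    have omB: "nrm (om k) \<le> B" for k
      by (rule B) (use om[of k] in \<open>auto intro: less_imp_le\<close>)
    have ob: "\<bar>om k i\<bar> \<le> B" if "i \<in> {1..M}" for k i
      using coord_le[OF that, of "om k"] omB[of k] by linarith
    obtain r Ls where r: "strict_mono r" "\<forall>i\<in>{1..M}. (\<lambda>k. om (r k) i) \<longlonglongrightarrow> Ls i"
      using subseq_conv[of M om B] ob by blast
    show ?thesis
    proof (intro exI[of _ Ls] ballI)
      fix uu yy assume uy: "uu \<in> U" "yy \<in> Y"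
      have conv: "(\<lambda>k. h (om (r k)) uu yy) \<longlonglongrightarrow> h Ls uu yy"
        unfolding hlin by (intro tendsto_add tendsto_const lin_tendsto[OF r(2)])
      show "sigma_star U Y f g G gphi gzeta M z \<le> ereal (h Ls uu yy)"
      proof (rule ccontr)
        assume "\<not> sigma_star U Y f g G gphi gzeta M z \<le> ereal (h Ls uu yy)"
        then have "ereal (h Ls uu yy) < \<sigma>s" by (simp add: \<sigma> \<sigma>s_def not_le)
        then obtain c where c: "ereal (h Ls uu yy) < ereal c" "ereal c < \<sigma>s" using ereal_dense2 by blast
        have ev: "\<forall>\<^sub>F k in sequentially. c < t (r k)"
        proof (cases \<sigma>s)
          case PInf
          obtain K :: nat where K: "c < real K" using reals_Archimedean2 by blast
          show ?thesis
          proof (rule eventually_sequentiallyI[of K])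
            fix k assume "K \<le> k"
            then have "real K \<le> real (r k)" using seq_suble[OF r(1), of k] by simp
            then show "c < t (r k)" using K PInf by (simp add: t_def)
          qed
        next
          case (real s)
          then have cs: "c < s" using c(2) by simp
          obtain K :: nat where K: "1 / (s - c) < real K" using reals_Archimedean2 by blast
          show ?thesis
          proof (rule eventually_sequentiallyI[of K])
            fix k assume "K \<le> k"
            then have "real K \<le> real (r k)" using seq_suble[OF r(1), of k] by simp
            then have "1 / (s - c) < real (r k) + 1" using K by linarith
            then have "1 < (s - c) * (real (r k) + 1)" using cs by (simp add: divide_less_eq mult.commute)
            then have "1 / (real (r k) + 1) < s - c" by (simp add: divide_less_eq mult.commute)
            then show "c < t (r k)" using real by (simp add: t_def)
          qed
        next
          case MInf then show ?thesis using \<theta>0le by simp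
        qed
        have ev2: "\<forall>\<^sub>F k in sequentially. c \<le> h (om (r k)) uu yy"
          using ev
        proof (rule eventually_mono)
          fix k assume "c < t (r k)"
          then show "c \<le> h (om (r k)) uu yy" using om[of "r k"] uy by (meson less_imp_le max.strict_boundedE less_trans)
        qed
        have "c \<le> h Ls uu yy"
          by (rule tendsto_le[OF trivial_limit_sequentially conv tendsto_const ev2])
        then show False using c(1) by simp
      qed
    qed
  qed
  then show ?thesis by (simp add: h_def)
qed

end
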